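(* Let $W\in\mathbb{R}^{m\times n}$ have a directed spanning set of $\mathbb{R}^n$ with respect to every $x\in\mathbb{R}^n$, let $x_0,x_1\in\mathbb{R}^n$, and for $a,b\in\mathbb{R}^n$ let $\ell^{a,b}(t)=(1-t)a+tb$, $t\in[0,1]$. Suppose there is $t'\in(0,1)$ such that for all $t\in[0,1]$, $W|_{S(\ell^{x_0,x_1}(t),W)}=W|_{S(x_0,W)}$ if $t<t'$ and $W|_{S(\ell^{x_0,x_1}(t),W)}=W|_{S(x_1,W)}$ if $t>t'$. Suppose further that there is $\delta>0$ such that for every $\delta x\in\mathbb{R}^n$ with $\|\delta x\|_2<\delta$ there is $\delta t$ with $W|_{S(\ell^{x_0,x_1+\delta x}(t),W)}=W|_{S(x_0,W)}$ if $t<t'+\delta t$ and $W|_{S(\ell^{x_0,x_1+\delta x}(t),W)}=W|_{S(x_1,W)}$ if $t>t'+\delta t$. Then $$\|\operatorname{ReLU}(Wx_0)-\operatorname{ReLU}(Wx_1)\|_2\ge\frac{1}{\sqrt2}\min\big(\sigma(W|_{S(x_0,W)}),\sigma(W|_{S(x_1,W)})\big)\|x_0-x_1\|_2.$$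
   Context: For $W$ with rows $w_1,\dots,w_m$ and $x\in\mathbb{R}^n$, $S(x,W)=\{j:\langle w_j,x\rangle\ge 0\}$; for an index set $\mathcal{I}$, $W|_{\mathcal{I}}$ is the $m\times n$ matrix whose $j$-th row is $w_j$ if $j\in\mathcal{I}$ and zero otherwise. $\sigma(M)$ is the smallest singular value of $M$. $W$ has a directed spanning set of $\mathbb{R}^n$ w.r.t. $x$ if $\{w_j: j\in S(x,W)\}$ spans $\mathbb{R}^n$. $\operatorname{ReLU}(y)=\max(y,0)$ componentwise. *)

theory Defs
  imports "HOL-Analysis.Analysis"
begin

text \<open>Matrices W in R^(m x n) are rendered as real^'n^'m; row j is W $ j.\<close>

definition actS :: "real^'n \<Rightarrow> real^'n^'m \<Rightarrow> 'm set" where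
  "actS x W = {j. W $ j \<bullet> x \<ge> 0}"

definition restrict_rows :: "real^'n^'m \<Rightarrow> 'm set \<Rightarrow> real^'n^'m" where
  "restrict_rows W I = (\<chi> j. if j \<in> I then W $ j else 0)"

definition directed_spanning :: "real^'n^'m \<Rightarrow> real^'n \<Rightarrow> bool" where
  "directed_spanning W x \<longleftrightarrow> span {W $ j | j. j \<in> actS x W} = UNIV"

definition sigma_min :: "real^'n^'m \<Rightarrow> real" where
  "sigma_min M = Inf {norm (M *v x) | x. norm x = 1}"

definition relu :: "real^'m \<Rightarrow> real^'m" where
  "relu y = (\<chi> j. max (y $ j) 0)"

definition seg :: "real^'n \<Rightarrow> real^'n \<Rightarrow> real \<Rightarrow> real^'n" where
  "seg a b t = (1 - t) *\<^sub>R a + t *\<^sub>R b"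

end

theory Submission
  imports Defs
begin

lemma restrict_mult_nth:
  "(restrict_rows W I *v d) $ j = (if j \<in> I then W $ j \<bullet> d else 0)"
  by (simp add: restrict_rows_def matrix_vector_mult_def inner_vec_def mult.commute)

lemma mult_nth: "(W *v y) $ j = W $ j \<bullet> y"
  by (simp add: matrix_vector_mult_def inner_vec_def mult.commute)

lemma relu_eq: "relu (W *v y) = restrict_rows W (actS y W) *v y"
  by (auto simp: vec_eq_iff relu_def restrict_rows_def actS_def mult_nth)

lemma sigma_nonneg: "sigma_min (M :: real^'n^'m) \<ge> 0"
proof -
  obtain i :: 'n where True by auto
  have "norm (axis i (1::real)) = 1" by simp
  hence ne: "{norm (M *v x) | x. norm x = 1} \<noteq> {}" by blast
  show ?thesis unfolding sigma_min_def by (rule cInf_greatest[OF ne]) auto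
qed

lemma sigma_bound: "sigma_min (M :: real^'n^'m) * norm d \<le> norm (M *v d)"
proof (cases "d = 0")
  case True then show ?thesis by simp
next
  case False
  let ?u = "(1 / norm d) *\<^sub>R d"
  have u: "norm ?u = 1" using False by simp
  have "sigma_min M \<le> norm (M *v ?u)" unfolding sigma_min_def
    by (rule cInf_lower) (use u in \<open>auto intro: bdd_belowI[where m=0]\<close>)
  also have "norm (M *v ?u) = norm (M *v d) / norm d"
    by (simp add: matrix_vector_mult_scaleR)
  finally show ?thesis using False by (simp add: field_simps)
qed

lemma inner_nonneg: "(restrict_rows W I *v d) \<bullet> (restrict_rows W J *v d) \<ge> 0"
  unfolding inner_vec_def by (rule sum_nonneg) (simp add: restrict_mult_nth)

theorem lemma6:
  fixes W :: "real^'n^'m" and x0 x1 :: "real^'n" and t' :: real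
  assumes span: "\<forall>x. directed_spanning W x"
    and t'_range: "0 < t'" "t' < 1"
    and switch: "\<forall>t\<in>{0..1}.
        (t < t' \<longrightarrow> restrict_rows W (actS (seg x0 x1 t) W) = restrict_rows W (actS x0 W)) \<and>
        (t > t' \<longrightarrow> restrict_rows W (actS (seg x0 x1 t) W) = restrict_rows W (actS x1 W))"
    and perturb: "\<exists>\<delta>>0. \<forall>dx :: real^'n. norm dx < \<delta> \<longrightarrow> (\<exists>dt. \<forall>t\<in>{0..1}.
        (t < t' + dt \<longrightarrow> restrict_rows W (actS (seg x0 (x1 + dx) t) W) = restrict_rows W (actS x0 W)) \<and>
        (t > t' + dt \<longrightarrow> restrict_rows W (actS (seg x0 (x1 + dx) t) W) = restrict_rows W (actS x1 W)))"
  shows "norm (relu (W *v x0) - relu (W *v x1)) \<ge>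
     (1 / sqrt 2) * min (sigma_min (restrict_rows W (actS x0 W))) (sigma_min (restrict_rows W (actS x1 W))) * norm (x0 - x1)"
proof -
  define A where "A = restrict_rows W (actS x0 W)"
  define B where "B = restrict_rows W (actS x1 W)"
  define p where "p = seg x0 x1 t'"
  define f where "f = (\<lambda>t. relu (W *v seg x0 x1 t))"
  have segc: "((\<lambda>t. seg x0 x1 t) \<longlongrightarrow> p) (at t' within S)" for S
    unfolding p_def seg_def by (intro tendsto_intros)
  have lin: "((\<lambda>t. M *v seg x0 x1 t) \<longlongrightarrow> M *v p) (at t' within S)" for S and M :: "real^'n^'m"
    using bounded_linear.tendsto[OF matrix_vector_mul_bounded_linear segc] by blast
  have fc: "(f \<longlongrightarrow> f t') (at t' within S)" for S
    unfolding f_def relu_def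
    by (intro tendsto_vec_lambda tendsto_max tendsto_const tendsto_vec_nth) (use lin p_def in auto)
  have "(f \<longlongrightarrow> A *v p) (at_left t')"
  proof -
    have "\<forall>\<^sub>F t in at_left t'. A *v seg x0 x1 t = f t"
      by (rule eventually_mono[OF eventually_at_left_real[OF t'_range(1)]]) (use switch t'_range in \<open>auto simp: f_def relu_eq A_def\<close>)
    from Lim_transform_eventually[OF lin this] show ?thesis .
  qed
  with fc have fA: "f t' = A *v p"
    using tendsto_unique[OF trivial_limit_at_left_real] by blast
  have "(f \<longlongrightarrow> B *v p) (at_right t')"
  proof -
    have "\<forall>\<^sub>F t in at_right t'. B *v seg x0 x1 t = f t"
      by (rule eventually_mono[OF eventually_at_right_real[OF t'_range(2)]]) (use switch t'_range in \<open>auto simp: f_def relu_eq B_def\<close>)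
    from Lim_transform_eventually[OF lin this] show ?thesis .
  qed
  with fc have fB: "f t' = B *v p"
    using tendsto_unique[OF trivial_limit_at_right_real] by blast
  define d where "d = x0 - x1"
  define u where "u = A *v d"
  define v where "v = B *v d"
  have "relu (W *v x0) - relu (W *v x1) = A *v x0 - B *v x1"
    by (simp add: relu_eq A_def B_def)
  also have "\<dots> = A *v (x0 - p) + B *v (p - x1)"
    using fA fB by (simp add: algebra_simps)
  also have "\<dots> = t' *\<^sub>R u + (1 - t') *\<^sub>R v"
    by (simp add: u_def v_def d_def p_def seg_def algebra_simps)
  finally have diff: "relu (W *v x0) - relu (W *v x1) = t' *\<^sub>R u + (1 - t') *\<^sub>R v" .
  define m where "m = min (sigma_min A) (sigma_min B)"
  have m0: "m \<ge> 0" using sigma_nonneg unfolding m_def by (simp add: sigma_nonneg)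
  have a: "m * norm d \<le> norm u" unfolding u_def
    using sigma_bound[of A d] mult_right_mono[of m "sigma_min A" "norm d"] unfolding m_def by simp
  have b: "m * norm d \<le> norm v" unfolding v_def
    using sigma_bound[of B d] mult_right_mono[of m "sigma_min B" "norm d"] unfolding m_def by simp
  have uv: "u \<bullet> v \<ge> 0" unfolding u_def v_def A_def B_def by (rule inner_nonneg)
  have sq: "(norm (t' *\<^sub>R u + (1 - t') *\<^sub>R v))\<^sup>2
      = t'\<^sup>2 * (norm u)\<^sup>2 + (1-t')\<^sup>2 * (norm v)\<^sup>2 + 2 * t' * (1-t') * (u \<bullet> v)"
  proof -
    have c: "v \<bullet> u = u \<bullet> v" by (rule inner_commute)
    show ?thesis
      unfolding power2_norm_eq_inner inner_add_left inner_add_right inner_scaleR_left inner_scaleR_right c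
      by (simp add: power2_eq_square algebra_simps)
  qed
  let ?k = "m * norm d"
  have k0: "?k \<ge> 0" using m0 by simp
  have "?k\<^sup>2 \<le> (norm u)\<^sup>2" using a k0 by (simp add: power_mono)
  moreover have "?k\<^sup>2 \<le> (norm v)\<^sup>2" using b k0 by (simp add: power_mono)
  moreover have "2 * t' * (1-t') * (u \<bullet> v) \<ge> 0" using uv t'_range by simp
  ultimately have "(t'\<^sup>2 + (1-t')\<^sup>2) * ?k\<^sup>2 \<le> (norm (t' *\<^sub>R u + (1 - t') *\<^sub>R v))\<^sup>2"
    unfolding sq
  proof -
    assume h1: "?k\<^sup>2 \<le> (norm u)\<^sup>2" and h2: "?k\<^sup>2 \<le> (norm v)\<^sup>2"
      and h3: "2 * t' * (1-t') * (u \<bullet> v) \<ge> 0"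
    have "t'\<^sup>2 * ?k\<^sup>2 \<le> t'\<^sup>2 * (norm u)\<^sup>2" by (rule mult_left_mono[OF h1]) simp
    moreover have "(1-t')\<^sup>2 * ?k\<^sup>2 \<le> (1-t')\<^sup>2 * (norm v)\<^sup>2" by (rule mult_left_mono[OF h2]) simp
    ultimately show "(t'\<^sup>2 + (1-t')\<^sup>2) * ?k\<^sup>2 \<le> t'\<^sup>2 * (norm u)\<^sup>2 + (1-t')\<^sup>2 * (norm v)\<^sup>2 + 2 * t' * (1-t') * (u \<bullet> v)"
      using h3 distrib_right[of "t'\<^sup>2" "(1-t')\<^sup>2" "?k\<^sup>2"] by linarith
  qed
  moreover have "t'\<^sup>2 + (1-t')\<^sup>2 \<ge> 1/2"
  proof -
    have "t'\<^sup>2 + (1-t')\<^sup>2 = 2*(t'-1/2)\<^sup>2 + 1/2" by (simp add: power2_eq_square algebra_simps)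
    then show ?thesis by simp
  qed
  ultimately have "?k\<^sup>2 / 2 \<le> (norm (t' *\<^sub>R u + (1 - t') *\<^sub>R v))\<^sup>2"
  proof -
    assume h1: "(t'\<^sup>2 + (1-t')\<^sup>2) * ?k\<^sup>2 \<le> (norm (t' *\<^sub>R u + (1 - t') *\<^sub>R v))\<^sup>2"
      and h2: "t'\<^sup>2 + (1-t')\<^sup>2 \<ge> 1/2"
    have "1/2 * ?k\<^sup>2 \<le> (t'\<^sup>2 + (1-t')\<^sup>2) * ?k\<^sup>2" by (rule mult_right_mono[OF h2]) simp
    with h1 show ?thesis by linarith
  qed
  moreover have "(?k / sqrt 2)\<^sup>2 = ?k\<^sup>2 / 2" by (simp add: power_divide)
  ultimately have "(?k / sqrt 2)\<^sup>2 \<le> (norm (t' *\<^sub>R u + (1 - t') *\<^sub>R v))\<^sup>2"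
    by linarith
  hence "?k / sqrt 2 \<le> norm (t' *\<^sub>R u + (1 - t') *\<^sub>R v)"
    by (rule power2_le_imp_le) simp
  hence "(1 / sqrt 2) * m * norm d \<le> norm (relu (W *v x0) - relu (W *v x1))"
    unfolding diff by simp
  then show ?thesis unfolding m_def A_def B_def d_def .
qed

end
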